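(* A linear code $\mathcal{C}$ of length $n$ over $R$ is Hermitian self-dual (i.e. $\mathcal{C}=\mathcal{C}^H$) if and only if the lattice $\frac12\Lambda(\mathcal{C})$ is unimodular, i.e. $\frac12\Lambda(\mathcal{C})=\big(\frac12\Lambda(\mathcal{C})\big)^*$.
   Context: $R=\mathbb{Z}_4[v]/(v^2-v)$, elements $a+bv$ with $a,b\in\mathbb{Z}_4$; conjugation on $R$ is $\overline{a+bv}=a+b(1-v)$. The Hermitian inner product on $R^n$ is $\langle\mathbf{w},\mathbf{u}\rangle=\sum_iw_i\overline{u_i}$ and $\mathcal{C}^H=\{\mathbf{w}\in R^n:\langle\mathbf{w},\mathbf{u}\rangle=0\ \forall\mathbf{u}\in\mathcal{C}\}$. Let $\ell$ be an integer with $\ell\equiv7\pmod 8$ and $2\ell+1$ square-free; $K=\mathbb{Q}(\sqrt{-(2\ell+1)})$, $\omega=\frac{1+\sqrt{-(2\ell+1)}}{2}$, $\mathcal{O}_K=\mathbb{Z}[\omega]$. Let $\rho:\mathcal{O}_K\to\mathcal{O}_K/4\mathcal{O}_K\cong R$ be reduction composed with the isomorphism $a+b\omega\mapsto a+bv$, applied coordinatewise. $\Lambda(\mathcal{C})=\{\mathbf{x}\in\mathcal{O}_K^n:\rho(\mathbf{x})\in\mathcal{C}\}$. For $\mathbf{x},\mathbf{y}\in K^n$, $\langle\mathbf{x},\mathbf{y}\rangle=\sum_ix_i\overline{y_i}$ (complex conjugation); for an $\mathcal{O}_K$-lattice $\Lambda\subseteq K^n$, $\Lambda^*=\{\mathbf{x}\in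 K^n:\langle\mathbf{x},\mathbf{y}\rangle\in\mathcal{O}_K\ \forall\mathbf{y}\in\Lambda\}$. *)

theory Defs
  imports Complex_Main "HOL-Library.Numeral_Type" "HOL-Computational_Algebra.Squarefree"
begin

text \<open>The ring R = Z4[v]/(v^2 - v): the element a + b v is the pair (a, b) with a, b in Z4.\<close>
type_synonym Rv = "4 \<times> 4"

definition R_add :: "Rv \<Rightarrow> Rv \<Rightarrow> Rv" where
  "R_add x y = (fst x + fst y, snd x + snd y)"

text \<open>(a + b v)(c + d v) = ac + (ad + bc + bd) v, using v^2 = v.\<close>
definition R_mult :: "Rv \<Rightarrow> Rv \<Rightarrow> Rv" where
  "R_mult x y = (fst x * fst y, fst x * snd y + snd x * fst y + snd x * snd y)"

definition R_zero :: Rv where "R_zero = (0, 0)"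

text \<open>conj(a + b v) = a + b (1 - v) = (a + b) - b v.\<close>
definition R_conj :: "Rv \<Rightarrow> Rv" where
  "R_conj x = (fst x + snd x, - snd x)"

text \<open>Words of length n: functions nat => R vanishing from index n on.\<close>
definition Rn :: "nat \<Rightarrow> (nat \<Rightarrow> Rv) set" where
  "Rn n = {w. \<forall>i\<ge>n. w i = R_zero}"

definition herm_ip_R :: "nat \<Rightarrow> (nat \<Rightarrow> Rv) \<Rightarrow> (nat \<Rightarrow> Rv) \<Rightarrow> Rv" where
  "herm_ip_R n w u = foldr R_add (map (\<lambda>i. R_mult (w i) (R_conj (u i))) [0..<n]) R_zero"

definition linear_code :: "nat \<Rightarrow> (nat \<Rightarrow> Rv) set \<Rightarrow> bool" where
  "linear_code n C \<longleftrightarrow> C \<subseteq> Rn n \<and> (\<lambda>_. R_zero) \<in> C \<and>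
     (\<forall>w\<in>C. \<forall>u\<in>C. (\<lambda>i. R_add (w i) (u i)) \<in> C) \<and>
     (\<forall>r. \<forall>w\<in>C. (\<lambda>i. R_mult r (w i)) \<in> C)"

definition herm_dual :: "nat \<Rightarrow> (nat \<Rightarrow> Rv) set \<Rightarrow> (nat \<Rightarrow> Rv) set" where
  "herm_dual n C = {w \<in> Rn n. \<forall>u\<in>C. herm_ip_R n w u = R_zero}"

text \<open>The number field K = Q(sqrt(-(2l+1))) inside the complex numbers, l > 0.\<close>
definition omega :: "nat \<Rightarrow> complex" where
  "omega l = (1 + \<i> * complex_of_real (sqrt (real (2 * l + 1)))) / 2"

definition OK :: "nat \<Rightarrow> complex set" where
  "OK l = {of_int a + of_int b * omega l | a b. True}"

definition Kfield :: "nat \<Rightarrow> complex set" where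
  "Kfield l = {of_rat p + of_rat q * omega l | p q. True}"

text \<open>rho: O_K -> O_K / 4 O_K = R, a + b omega |-> a + b v (reduction mod 4).\<close>
definition rho :: "nat \<Rightarrow> complex \<Rightarrow> Rv" where
  "rho l z = (let (a, b) = (THE (a, b). z = of_int a + of_int b * omega l)
              in (of_int a, of_int b))"

definition Lambda :: "nat \<Rightarrow> nat \<Rightarrow> (nat \<Rightarrow> Rv) set \<Rightarrow> (nat \<Rightarrow> complex) set" where
  "Lambda l n C = {x. (\<forall>i<n. x i \<in> OK l) \<and> (\<forall>i\<ge>n. x i = 0) \<and> (\<lambda>i. rho l (x i)) \<in> C}"

definition half_lattice :: "(nat \<Rightarrow> complex) set \<Rightarrow> (nat \<Rightarrow> complex) set" where
  "half_lattice L = (\<lambda>x i. x i / 2) ` L"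

definition lattice_dual :: "nat \<Rightarrow> nat \<Rightarrow> (nat \<Rightarrow> complex) set \<Rightarrow> (nat \<Rightarrow> complex) set" where
  "lattice_dual l n L = {x. (\<forall>i<n. x i \<in> Kfield l) \<and> (\<forall>i\<ge>n. x i = 0) \<and>
      (\<forall>y\<in>L. (\<Sum>i<n. x i * cnj (y i)) \<in> OK l)}"

end

theory Submission
  imports Defs
begin

lemma z4: "((of_int a :: 4) = 0) \<longleftrightarrow> 4 dvd a"
proof -
  have "(of_int a :: 4) = 0 \<longleftrightarrow> Rep_bit0 (of_int a :: 4) = Rep_bit0 (0::4)" using bit0.Rep_inject_sym by blast
  also have "\<dots> \<longleftrightarrow> a mod 4 = 0" by (simp add: bit0.of_int_eq bit0.Rep_0 bit0.Abs_inverse)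
  finally show ?thesis by auto
qed
lemma z4s: "\<exists>a. (r::4) = of_int a"
  by (cases r) auto
definition emb :: "nat \<Rightarrow> int \<Rightarrow> int \<Rightarrow> complex" where
  "emb l a b = of_int a + of_int b * omega l"

lemma Im_omega: "Im (omega l) = sqrt (real (2*l+1)) / 2"
  by (simp add: omega_def)
lemma Re_omega: "Re (omega l) = 1 / 2"
  by (simp add: omega_def)

lemma emb_inj: assumes "emb l a b = emb l c d" shows "a = c \<and> b = d"
proof -
  have "Im (emb l a b) = Im (emb l c d)" using assms by simp
  hence "of_int b * sqrt (real (2*l+1)) = of_int d * sqrt (real (2*l+1))"
    by (simp add: emb_def Im_omega)
  moreover have "sqrt (real (2*l+1)) > 0" by simp
  ultimately have bd: "b = d" by simp
  then show ?thesis using assms by (simp add: emb_def)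
qed

lemma rho_emb: "rho l (emb l a b) = (of_int a, of_int b)"
proof -
  have "(THE (a', b'). emb l a b = of_int a' + of_int b' * omega l) = (a, b)"
    by (rule the_equality) (auto simp: emb_def[symmetric] dest: emb_inj)
  then show ?thesis by (simp add: rho_def)
qed

lemma OK_iff: "z \<in> OK l \<longleftrightarrow> (\<exists>a b. z = emb l a b)"
  by (auto simp: OK_def emb_def)

lemma cnj_omega: "cnj (omega l) = 1 - omega l"
  by (simp add: omega_def complex_eq_iff)

lemma omega_sq: assumes "odd l"
  shows "omega l * omega l = omega l - of_int ((int l + 1) div 2)"
proof -
  have m: "real_of_int ((int l + 1) div 2) = (real l + 1) / 2"
  proof -
    obtain k where k: "l = 2*k+1" using assms oddE by blast
    have "(int l + 1) div 2 = int k + 1" unfolding k by simp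
    thus ?thesis unfolding k by simp
  qed
  have ss: "sqrt (real (2*l+1)) * sqrt (real (2*l+1)) = 2 * real l + 1" by simp
  define M where "M = (int l + 1) div 2"
  have mM: "real_of_int M = (real l + 1) / 2" using m M_def by simp
  show ?thesis unfolding M_def[symmetric]
    by (simp add: complex_eq_iff Re_omega Im_omega mM ss field_simps)
qed

lemma ring_id: fixes a b c d m :: "'a::comm_ring_1"
  assumes h: "w * w = w - m"
  shows "(a + b*w) * ((c+d) - d*w) = (a*(c+d) + b*d*m) + (b*c - a*d)*w"
proof -
  have "(a + b*w) * ((c+d) - d*w) = a*(c+d) + (b*(c+d)-a*d)*w - b*d*(w*w)"
    by (simp add: algebra_simps)
  also have "\<dots> = (a*(c+d) + b*d*m) + (b*c - a*d)*w" unfolding h by (simp add: algebra_simps)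
  finally show ?thesis .
qed

lemma emb_mult_cnj: assumes "odd l"
  shows "emb l a b * cnj (emb l c d) =
    emb l (a*(c+d) + b*d*((int l + 1) div 2)) (b*c - a*d)"
proof -
  have "cnj (emb l c d) = (of_int c + of_int d) - of_int d * omega l"
    by (simp add: emb_def cnj_omega algebra_simps)
  then show ?thesis
    using ring_id[OF omega_sq[OF assms], of "of_int a" "of_int b" "of_int c" "of_int d"]
    by (simp add: emb_def add_diff_eq)
qed

lemma emb_sum: "(\<Sum>i\<in>A. emb l (f i) (g i)) = emb l (\<Sum>i\<in>A. f i) (\<Sum>i\<in>A. g i)"
  by (simp add: emb_def sum.distrib sum_distrib_right)

lemma foldr_R_add: "foldr R_add (map f xs) R_zero =
   (sum_list (map (\<lambda>i. fst (f i)) xs), sum_list (map (\<lambda>i. snd (f i)) xs))"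
  by (induction xs) (auto simp: R_add_def R_zero_def)

lemma herm_ip_sum: "herm_ip_R n w u =
   ((\<Sum>i<n. fst (R_mult (w i) (R_conj (u i)))), (\<Sum>i<n. snd (R_mult (w i) (R_conj (u i)))))"
  unfolding herm_ip_R_def foldr_R_add
  by (simp add: lessThan_atLeast0 sum_set_upt_conv_sum_list_nat[symmetric])

lemma emb_div4: "emb l p q / 4 \<in> OK l \<longleftrightarrow> 4 dvd p \<and> 4 dvd q"
proof
  assume "emb l p q / 4 \<in> OK l"
  then obtain a b where "emb l p q / 4 = emb l a b" by (auto simp: OK_iff)
  hence "emb l p q = emb l (4*a) (4*b)" by (simp add: emb_def field_simps)
  thus "4 dvd p \<and> 4 dvd q" by (auto dest: emb_inj)
next
  assume "4 dvd p \<and> 4 dvd q"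
  then obtain a b where "p = 4*a" "q = 4*b" by (auto elim!: dvdE)
  hence "emb l p q / 4 = emb l a b" by (simp add: emb_def field_simps)
  thus "emb l p q / 4 \<in> OK l" by (auto simp: OK_iff)
qed

lemma lemA:
  assumes l: "l mod 8 = 7" and x: "\<forall>i<n. x i \<in> OK l" and y: "\<forall>i<n. y i \<in> OK l"
  shows "(\<Sum>i<n. x i * cnj (y i)) / 4 \<in> OK l \<longleftrightarrow>
         herm_ip_R n (\<lambda>i. rho l (x i)) (\<lambda>i. rho l (y i)) = R_zero"
proof -
  have odd: "odd l" using l by presburger
  define M where "M = (int l + 1) div 2"
  have M4: "4 dvd M" unfolding M_def using l by presburger
  obtain xa xb where X: "\<forall>i<n. x i = emb l (xa i) (xb i)"
    using x unfolding OK_iff by metis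
  obtain ya yb where Y: "\<forall>i<n. y i = emb l (ya i) (yb i)"
    using y unfolding OK_iff by metis
  define P where "P i = xa i * (ya i + yb i) + xb i * yb i * M" for i
  define Q where "Q i = xb i * ya i - xa i * yb i" for i
  have "(\<Sum>i<n. x i * cnj (y i)) = (\<Sum>i<n. emb l (P i) (Q i))"
    using X Y by (intro sum.cong) (auto simp: emb_mult_cnj[OF odd] P_def Q_def M_def)
  also have "\<dots> = emb l (\<Sum>i<n. P i) (\<Sum>i<n. Q i)" by (rule emb_sum)
  finally have S: "(\<Sum>i<n. x i * cnj (y i)) = emb l (\<Sum>i<n. P i) (\<Sum>i<n. Q i)" .
  have Mz: "(of_int M :: 4) = 0" using M4 z4 by blast
  have "herm_ip_R n (\<lambda>i. rho l (x i)) (\<lambda>i. rho l (y i)) =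
        ((\<Sum>i<n. of_int (P i)), (\<Sum>i<n. of_int (Q i)))"
    unfolding herm_ip_sum
    using X Y Mz by (auto intro!: sum.cong simp: rho_emb R_mult_def R_conj_def P_def Q_def algebra_simps)
  also have "\<dots> = (of_int (\<Sum>i<n. P i), of_int (\<Sum>i<n. Q i))" by simp
  finally have H: "herm_ip_R n (\<lambda>i. rho l (x i)) (\<lambda>i. rho l (y i)) =
        (of_int (\<Sum>i<n. P i), of_int (\<Sum>i<n. Q i))" .
  show ?thesis unfolding S H emb_div4 R_zero_def prod.inject z4 by (rule refl)
qed

lemma rho_0: "rho l 0 = R_zero"
  using rho_emb[of l 0 0] by (simp add: emb_def R_zero_def)

lemma zero_OK: "0 \<in> OK l" by (auto simp: OK_iff emb_def intro: exI[of _ 0])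

lemma four_OK: "4 \<in> OK l"
  unfolding OK_iff by (rule exI[of _ 4], rule exI[of _ 0]) (simp add: emb_def)

lemma rho_4: "rho l 4 = R_zero"
  using rho_emb[of l 4 0] by (simp add: emb_def R_zero_def)

lemma half_K: assumes "z \<in> OK l" shows "z / 2 \<in> Kfield l"
proof -
  obtain a b where z: "z = emb l a b" using assms by (auto simp: OK_iff)
  have "z / 2 = of_rat (of_int a / 2) + of_rat (of_int b / 2) * omega l"
    by (simp add: z emb_def of_rat_divide field_simps)
  then show ?thesis unfolding Kfield_def by blast
qed

lemma lift:
  assumes "u \<in> Rn n"
  shows "\<exists>x. (\<forall>i<n. x i \<in> OK l) \<and> (\<forall>i\<ge>n. x i = 0) \<and> (\<lambda>i. rho l (x i)) = u"
proof -
  obtain ra :: "4 \<Rightarrow> int" where ra: "\<And>r. r = of_int (ra r)" using z4s by metis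
  define x where "x i = (if i < n then emb l (ra (fst (u i))) (ra (snd (u i))) else 0)" for i
  have "(\<lambda>i. rho l (x i)) = u"
  proof
    fix i show "rho l (x i) = u i"
    proof (cases "i < n")
      case True then show ?thesis by (simp add: x_def rho_emb flip: ra)
    next
      case False then show ?thesis using assms by (simp add: x_def rho_0 Rn_def)
    qed
  qed
  moreover have "\<forall>i<n. x i \<in> OK l" by (auto simp: x_def OK_iff)
  moreover have "\<forall>i\<ge>n. x i = 0" by (auto simp: x_def)
  ultimately show ?thesis by blast
qed

lemma sum_half: "(\<Sum>i<n. (x i / 2) * cnj (y i / 2)) = (\<Sum>i<n. x i * cnj (y i)) / 4"
  by (simp add: sum_divide_distrib)

lemma half_mem: "h \<in> half_lattice L \<longleftrightarrow> (\<exists>x\<in>L. h = (\<lambda>i. x i / 2))"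
  by (auto simp: half_lattice_def)

lemma Lambda_mem: "x \<in> Lambda l n C \<longleftrightarrow>
   (\<forall>i<n. x i \<in> OK l) \<and> (\<forall>i\<ge>n. x i = 0) \<and> (\<lambda>i. rho l (x i)) \<in> C"
  by (simp add: Lambda_def)

theorem theorem9:
  fixes l n :: nat and C :: "(nat \<Rightarrow> Rv) set"
  assumes "l mod 8 = 7"
    and "squarefree (2 * l + 1)"
    and "linear_code n C"
  shows "herm_dual n C = C \<longleftrightarrow>
         half_lattice (Lambda l n C) = lattice_dual l n (half_lattice (Lambda l n C))"
proof -
  note l = assms(1)
  have CRn: "C \<subseteq> Rn n" and C0: "(\<lambda>_. R_zero) \<in> C" using assms(3) by (auto simp: linear_code_def)
  define L where "L = Lambda l n C"
  define H where "H = half_lattice L"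
  have key: "(\<Sum>i<n. (x i / 2) * cnj (y i / 2)) \<in> OK l \<longleftrightarrow>
       herm_ip_R n (\<lambda>i. rho l (x i)) (\<lambda>i. rho l (y i)) = R_zero"
    if "\<forall>i<n. x i \<in> OK l" "\<forall>i<n. y i \<in> OK l" for x y
    unfolding sum_half using lemA[OF l that] .
  have liftC: "\<exists>w\<in>L. (\<lambda>i. rho l (w i)) = u" if uC0: "u \<in> C" for u
  proof -
    obtain x where "(\<forall>i<n. x i \<in> OK l) \<and> (\<forall>i\<ge>n. x i = 0) \<and> (\<lambda>i. rho l (x i)) = u"
      using lift[of u n l] uC0 CRn by blast
    then show ?thesis using uC0 by (auto simp: L_def Lambda_mem)
  qed
  have half_in_dual: "(\<lambda>i. x i / 2) \<in> lattice_dual l n H"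
    if x1: "\<forall>i<n. x i \<in> OK l" and x2: "\<forall>i\<ge>n. x i = 0"
       and x3: "\<forall>u\<in>C. herm_ip_R n (\<lambda>i. rho l (x i)) u = R_zero" for x
  proof -
    have "(\<Sum>i<n. (x i / 2) * cnj (y i)) \<in> OK l" if "y \<in> H" for y
    proof -
      obtain w where w: "w \<in> L" "y = (\<lambda>i. w i / 2)" using \<open>y \<in> H\<close> by (auto simp: H_def half_mem)
      have wO: "\<forall>i<n. w i \<in> OK l" and wC: "(\<lambda>i. rho l (w i)) \<in> C" using w(1) by (auto simp: L_def Lambda_mem)
      show ?thesis unfolding w(2) using key[OF x1 wO] x3 wC by simp
    qed
    then show ?thesis using x1 x2 half_K by (auto simp: lattice_dual_def)
  qed
  show ?thesis
  proof
    assume sd: "herm_dual n C = C"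
    show "half_lattice (Lambda l n C) = lattice_dual l n (half_lattice (Lambda l n C))"
      unfolding L_def[symmetric] H_def[symmetric]
    proof
      show "H \<subseteq> lattice_dual l n H"
      proof
        fix h assume "h \<in> H"
        then obtain x where x: "x \<in> L" "h = (\<lambda>i. x i / 2)" by (auto simp: H_def half_mem)
        have xs: "\<forall>i<n. x i \<in> OK l" "\<forall>i\<ge>n. x i = 0" "(\<lambda>i. rho l (x i)) \<in> C"
          using x(1) by (auto simp: L_def Lambda_mem)
        have "\<forall>u\<in>C. herm_ip_R n (\<lambda>i. rho l (x i)) u = R_zero"
          using xs(3) sd by (auto simp: herm_dual_def)
        then show "h \<in> lattice_dual l n H" unfolding x(2) using half_in_dual xs by blast
      qed
    next
      show "lattice_dual l n H \<subseteq> H"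
      proof
        fix h assume hd: "h \<in> lattice_dual l n H"
        define z where "z i = 2 * h i" for i
        have hz: "h = (\<lambda>i. z i / 2)" by (simp add: z_def)
        have zO: "\<forall>i<n. z i \<in> OK l"
        proof (intro allI impI)
          fix i assume "i < n"
          define e where "e j = (if j = i then 4 else 0 :: complex)" for j
          have "e \<in> L" unfolding L_def Lambda_mem
          proof (intro conjI allI impI)
            fix j show "j < n \<Longrightarrow> e j \<in> OK l" by (simp add: e_def four_OK zero_OK)
            show "n \<le> j \<Longrightarrow> e j = 0" using \<open>i < n\<close> by (simp add: e_def)
          next
            have "(\<lambda>j. rho l (e j)) = (\<lambda>_. R_zero)" by (auto simp: e_def rho_4 rho_0)
            then show "(\<lambda>j. rho l (e j)) \<in> C" using C0 by simp
          qed
          hence "(\<lambda>j. e j / 2) \<in> H" by (auto simp: H_def half_mem)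
          hence "(\<Sum>j<n. h j * cnj (e j / 2)) \<in> OK l" using hd by (auto simp: lattice_dual_def)
          moreover have "(\<Sum>j<n. h j * cnj (e j / 2)) = z i"
          proof -
            have "(\<lambda>j. h j * cnj (e j / 2)) = (\<lambda>j. if j = i then 2 * h j else 0)"
              by (auto simp: e_def)
            then have "(\<Sum>j<n. h j * cnj (e j / 2)) = (\<Sum>j<n. if j = i then 2 * h j else 0)"
              by (rule arg_cong)
            also have "\<dots> = 2 * h i" using \<open>i < n\<close> by simp
            finally show ?thesis by (simp add: z_def)
          qed
          ultimately show "z i \<in> OK l" by simp
        qed
        have z0: "\<forall>i\<ge>n. z i = 0" using hd by (auto simp: z_def lattice_dual_def)
        have "(\<lambda>i. rho l (z i)) \<in> herm_dual n C"
          unfolding herm_dual_def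
        proof (intro CollectI conjI ballI)
          show "(\<lambda>i. rho l (z i)) \<in> Rn n" using z0 by (simp add: Rn_def rho_0)
        next
          fix u assume "u \<in> C"
          then obtain w where w: "w \<in> L" "(\<lambda>i. rho l (w i)) = u" using liftC by blast
          have wO: "\<forall>i<n. w i \<in> OK l" using w(1) by (auto simp: L_def Lambda_mem)
          have "(\<lambda>i. w i / 2) \<in> H" using w(1) by (auto simp: H_def half_mem)
          hence "(\<Sum>i<n. (z i / 2) * cnj (w i / 2)) \<in> OK l"
            using hd unfolding hz by (auto simp: lattice_dual_def)
          then show "herm_ip_R n (\<lambda>i. rho l (z i)) u = R_zero"
            using key[OF zO wO] w(2) by simp
        qed
        hence "z \<in> L" using sd zO z0 by (simp add: L_def Lambda_mem)
        then show "h \<in> H" unfolding hz by (auto simp: H_def half_mem)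
      qed
    qed
  next
    assume uni: "half_lattice (Lambda l n C) = lattice_dual l n (half_lattice (Lambda l n C))"
    hence uni': "H = lattice_dual l n H" by (simp add: H_def L_def)
    show "herm_dual n C = C"
    proof
      show "C \<subseteq> herm_dual n C"
      proof
        fix u assume uC: "u \<in> C"
        obtain x where x: "x \<in> L" "(\<lambda>i. rho l (x i)) = u" using liftC[OF uC] by blast
        have xO: "\<forall>i<n. x i \<in> OK l" using x(1) by (auto simp: L_def Lambda_mem)
        have xH: "(\<lambda>i. x i / 2) \<in> lattice_dual l n H"
          using x(1) uni' by (auto simp: H_def half_mem)
        have "herm_ip_R n u v = R_zero" if vC: "v \<in> C" for v
        proof -
          obtain w where w: "w \<in> L" "(\<lambda>i. rho l (w i)) = v" using liftC[OF vC] by blast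
          have wO: "\<forall>i<n. w i \<in> OK l" using w(1) by (auto simp: L_def Lambda_mem)
          have "(\<lambda>i. w i / 2) \<in> H" using w(1) by (auto simp: H_def half_mem)
          hence "(\<Sum>i<n. (x i / 2) * cnj (w i / 2)) \<in> OK l"
            using xH by (auto simp: lattice_dual_def)
          then show ?thesis using key[OF xO wO] w(2) x(2) by simp
        qed
        then show "u \<in> herm_dual n C" using uC CRn by (auto simp: herm_dual_def)
      qed
    next
      show "herm_dual n C \<subseteq> C"
      proof
        fix u assume uD: "u \<in> herm_dual n C"
        hence uR: "u \<in> Rn n" and uo: "\<forall>v\<in>C. herm_ip_R n u v = R_zero" by (auto simp: herm_dual_def)
        obtain x where x: "\<forall>i<n. x i \<in> OK l" "\<forall>i\<ge>n. x i = 0" "(\<lambda>i. rho l (x i)) = u"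
          using lift[OF uR] by blast
        have "(\<lambda>i. x i / 2) \<in> lattice_dual l n H"
          using half_in_dual[OF x(1) x(2)] uo x(3) by simp
        hence "(\<lambda>i. x i / 2) \<in> H" using uni' by simp
        then obtain x' where x': "x' \<in> L" "(\<lambda>i. x i / 2) = (\<lambda>i. x' i / 2)"
          by (auto simp: H_def half_mem)
        have "x = x'"
        proof
          fix i show "x i = x' i" using fun_cong[OF x'(2), of i] by simp
        qed
        then show "u \<in> C" using x'(1) x(3) by (auto simp: L_def Lambda_mem)
      qed
    qed
  qed
qed

end
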